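(* Let $\mathbb{K}\in\{\mathbb{R},\mathbb{C}\}$, $U:=\mathbb{K}^n$, $\mathbf{u}^1,\dots,\mathbf{u}^m\in U$, $\mathbf{U}_m:=[\mathbf{u}^1,\dots,\mathbf{u}^m]$, $U_m:=\mathrm{range}(\mathbf{U}_m)$, and $\mathbf{\Theta}\in\mathbb{K}^{k\times n}$ with $\mathbf{U}_m^{\mathbf{\Theta}}:=\mathbf{\Theta}\mathbf{U}_m$. Let $\mathbf{G}:=(\mathbf{U}_m^{\mathbf{\Theta}})^{\mathrm{H}}\mathbf{U}_m^{\mathbf{\Theta}}$, $l:=\mathrm{rank}(\mathbf{U}_m^{\mathbf{\Theta}})$, and let $(\lambda_i,\mathbf{t}_i)_{i=1}^{l}$ be eigenpairs of $\mathbf{G}$ associated with its nonzero eigenvalues, with orthonormal eigenvectors and $\lambda_1\ge\dots\ge\lambda_l$. For $r\le l$ set $\mathbf{T}_r:=[\mathbf{t}_1,\dots,\mathbf{t}_r]$ and $U_r:=\mathrm{range}(\mathbf{U}_m\mathbf{T}_r)$. For a subspace $V\subseteq U_m$ let $\mathbf{P}_V^{\mathbf{\Theta}}\mathbf{x}\in\arg\min_{\mathbf{w}\in V}\|\mathbf{\Theta}(\mathbf{x}-\mathbf{w})\|$ for $\mathbf{x}\in U_m$, and define $$\Delta^{\mathrm{POD}}(V):=\frac1m\sum_{i=1}^m\|\mathbf{\Theta}(\mathbf{u}^i-\mathbf{P}_V^{\mathbf{\Theta}}\mathbf{u}^i)\|^2.$$ Then $\Delta^{\mathrm{POD}}(U_r)=\frac1m\sum_{i=r+1}^{l}\lambda_i$,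 and for every subspace $V_r\subseteq U_m$ with $\dim(V_r)\le r$, $\Delta^{\mathrm{POD}}(U_r)\le\Delta^{\mathrm{POD}}(V_r)$.
   Context: $\|\cdot\|$ is the Euclidean norm on $\mathbb{K}^k$; $\mathbf{M}^{\mathrm{H}}$ is the (conjugate) transpose; $\mathrm{range}$ is column space. The value $\|\mathbf{\Theta}(\mathbf{x}-\mathbf{P}_V^{\mathbf{\Theta}}\mathbf{x})\|$ does not depend on the choice of minimizer. *)

theory Defs
  imports "Jordan_Normal_Form.Schur_Decomposition" "Jordan_Normal_Form.DL_Rank"
begin

definition vnorm :: "'a::real_normed_field vec \<Rightarrow> real" where
  "vnorm x = sqrt (\<Sum>i<dim_vec x. (norm (x $ i))\<^sup>2)"

definition mat_range :: "'a::field mat \<Rightarrow> 'a vec set" where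
  "mat_range A = {A *\<^sub>v c | c. c \<in> carrier_vec (dim_col A)}"

definition theta_proj :: "'a::{real_normed_field,field} mat \<Rightarrow> 'a vec set \<Rightarrow> 'a vec \<Rightarrow> 'a vec" where
  "theta_proj \<Theta> V x = (SOME w. w \<in> V \<and>
      (\<forall>w'\<in>V. vnorm (\<Theta> *\<^sub>v (x - w)) \<le> vnorm (\<Theta> *\<^sub>v (x - w'))))"

text \<open>Delta^POD(V) for snapshots u^1..u^m = columns 0..m-1 of U.\<close>
definition delta_pod :: "'a::{real_normed_field,field} mat \<Rightarrow> 'a mat \<Rightarrow> 'a vec set \<Rightarrow> real" where
  "delta_pod \<Theta> U V = (1 / real (dim_col U)) *
     (\<Sum>i<dim_col U. (vnorm (\<Theta> *\<^sub>v (col U i - theta_proj \<Theta> V (col U i))))\<^sup>2)"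

definition is_subspace :: "nat \<Rightarrow> 'a::field vec set \<Rightarrow> bool" where
  "is_subspace n V = VectorSpace.subspace class_ring V (module_vec TYPE('a) n)"

definition subspace_dim :: "nat \<Rightarrow> 'a::field vec set \<Rightarrow> nat" where
  "subspace_dim n V = vectorspace.dim class_ring ((module_vec TYPE('a) n)\<lparr>carrier := V\<rparr>)"

end

theory Submission
  imports Defs
begin

definition nsq :: "'a::real_normed_field vec \<Rightarrow> real" where
  "nsq x = (\<Sum>i<dim_vec x. (norm (x $ i))\<^sup>2)"

lemma nsq_nonneg: "nsq x \<ge> 0"
  unfolding nsq_def by (intro sum_nonneg) auto

lemma vnorm_nsq: "vnorm x = sqrt (nsq x)"
  unfolding vnorm_def nsq_def by simp

lemma vnorm_sq: "(vnorm x)\<^sup>2 = nsq x"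
  unfolding vnorm_nsq using nsq_nonneg by simp

definition lcomb :: "nat \<Rightarrow> nat \<Rightarrow> (nat \<Rightarrow> 'a::comm_ring_1) \<Rightarrow> (nat \<Rightarrow> 'a vec) \<Rightarrow> 'a vec" where
  "lcomb k q c f = vec k (\<lambda>i. \<Sum>j<q. c j * f j $ i)"

definition spanset :: "nat \<Rightarrow> nat \<Rightarrow> (nat \<Rightarrow> 'a::comm_ring_1 vec) \<Rightarrow> 'a vec set" where
  "spanset k q f = range (\<lambda>c. lcomb k q c f)"

lemma lcomb_carrier[simp]: "lcomb k q c f \<in> carrier_vec k"
  unfolding lcomb_def by simp

lemma lcomb_dim[simp]: "dim_vec (lcomb k q c f) = k"
  unfolding lcomb_def by simp

lemma lcomb_index[simp]: "i < k \<Longrightarrow> lcomb k q c f $ i = (\<Sum>j<q. c j * f j $ i)"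
  unfolding lcomb_def by simp

lemma spanset_carrier: "x \<in> spanset k q f \<Longrightarrow> x \<in> carrier_vec k"
  unfolding spanset_def by auto

lemma lcomb_Suc: assumes "f q \<in> carrier_vec k"
  shows "lcomb k (Suc q) c f = lcomb k q c f + c q \<cdot>\<^sub>v f q"
  by (rule eq_vecI, insert assms, auto)

lemma lcomb_upd_Suc: assumes "z \<in> carrier_vec k"
  shows "lcomb k (Suc q) c (f(q := z)) = lcomb k q c f + c q \<cdot>\<^sub>v z"
  by (rule eq_vecI, insert assms, auto intro!: sum.cong)

lemma lcomb_mono: "lcomb k (Suc q) (c(q := 0)) f = lcomb k q c f"
  by (rule eq_vecI, auto intro!: sum.cong)

lemma spanset_mono: "spanset k q f \<subseteq> spanset k (Suc q) f"
  unfolding spanset_def using lcomb_mono by (metis image_subset_iff rangeI)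

lemma spanset_mono_upd: "spanset k q f \<subseteq> spanset k (Suc q) (f(q := z))"
proof
  fix x assume "x \<in> spanset k q f"
  then obtain c where x: "x = lcomb k q c f" unfolding spanset_def by auto
  have "lcomb k (Suc q) (c(q := 0)) (f(q:=z)) = lcomb k q c f"
    by (rule eq_vecI, auto intro!: sum.cong)
  then show "x \<in> spanset k (Suc q) (f(q := z))" unfolding spanset_def x by (metis rangeI)
qed

lemma spanset_self: assumes "j < q" "f j \<in> carrier_vec k"
  shows "f j \<in> spanset k q f"
proof -
  have "lcomb k q (\<lambda>i. if i = j then 1 else 0) f = f j"
  proof (rule eq_vecI)
    fix i assume "i < dim_vec (f j)"
    then have i: "i < k" using assms by simp
    have "(\<Sum>l<q. (if l = j then 1 else 0) * f l $ i) = (\<Sum>l<q. if l = j then f j $ i else 0)"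
      by (rule sum.cong) auto
    then show "lcomb k q (\<lambda>i. if i = j then 1 else 0) f $ i = f j $ i"
      using i assms by simp
  qed (insert assms, simp)
  then show ?thesis unfolding spanset_def by (metis rangeI)
qed

lemma sum_swap_mult:
  fixes c :: "nat \<Rightarrow> 'a::comm_ring_1"
  shows "(\<Sum>j<q. c j * (\<Sum>l<p. D j l * E l)) = (\<Sum>l<p. (\<Sum>j<q. c j * D j l) * E l)"
proof -
  have "(\<Sum>j<q. c j * (\<Sum>l<p. D j l * E l)) = (\<Sum>j<q. \<Sum>l<p. c j * D j l * E l)"
    by (simp add: sum_distrib_left mult.assoc)
  also have "\<dots> = (\<Sum>l<p. \<Sum>j<q. c j * D j l * E l)" by (rule sum.swap)
  also have "\<dots> = (\<Sum>l<p. (\<Sum>j<q. c j * D j l) * E l)" by (simp add: sum_distrib_right)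
  finally show ?thesis .
qed

lemma spanset_comp:
  assumes "\<forall>j<q. f j \<in> spanset k p e"
  shows "spanset k q f \<subseteq> spanset k p e"
proof
  from assms have "\<forall>j. j < q \<longrightarrow> (\<exists>c. f j = lcomb k p c e)"
    unfolding spanset_def by blast
  then obtain D where D: "\<And>j. j < q \<Longrightarrow> f j = lcomb k p (D j) e"
    unfolding choice_iff' by blast
  fix x assume "x \<in> spanset k q f"
  then obtain c where x: "x = lcomb k q c f" unfolding spanset_def by auto
  have "x = lcomb k p (\<lambda>i. \<Sum>j<q. c j * D j i) e"
  proof (rule eq_vecI)
    fix i assume "i < dim_vec (lcomb k p (\<lambda>i. \<Sum>j<q. c j * D j i) e)"
    then have i: "i < k" by simp
    have "x $ i = (\<Sum>j<q. c j * (\<Sum>l<p. D j l * e l $ i))"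
      unfolding x using i D by (auto intro!: sum.cong)
    also have "\<dots> = (\<Sum>l<p. (\<Sum>j<q. c j * D j l) * e l $ i)"
      by (rule sum_swap_mult)
    finally show "x $ i = lcomb k p (\<lambda>i. \<Sum>j<q. c j * D j i) e $ i" using i by simp
  qed (simp add: x)
  then show "x \<in> spanset k p e" unfolding spanset_def by auto
qed

definition ON :: "nat \<Rightarrow> nat \<Rightarrow> (nat \<Rightarrow> 'b::conjugatable_field vec) \<Rightarrow> bool" where
  "ON k p e \<longleftrightarrow> (\<forall>j<p. e j \<in> carrier_vec k) \<and>
     (\<forall>i<p. \<forall>j<p. e i \<bullet>c e j = (if i = j then 1 else 0))"

lemma ON_carrier: "ON k p e \<Longrightarrow> j < p \<Longrightarrow> e j \<in> carrier_vec k"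
  unfolding ON_def by auto

lemma ON_ip: "ON k p e \<Longrightarrow> i < p \<Longrightarrow> j < p \<Longrightarrow> e i \<bullet>c e j = (if i = j then 1 else 0)"
  unfolding ON_def by auto

lemma lcomb_cong: "(\<And>j. j < q \<Longrightarrow> c j = d j) \<Longrightarrow> lcomb k q c f = lcomb k q d f"
  by (rule eq_vecI, auto intro!: sum.cong)

lemma lcomb_diff: "lcomb k q c f - lcomb k q d f = lcomb k q (\<lambda>j. c j - d j) f"
  by (rule eq_vecI, auto simp: sum_subtractf algebra_simps)

lemma ip_lcomb_left:
  assumes w: "w \<in> carrier_vec k"
  shows "lcomb k q c f \<bullet>c w = (\<Sum>j<q. c j * (f j \<bullet>c w))"
proof -
  have "lcomb k q c f \<bullet>c w = (\<Sum>i<k. (\<Sum>j<q. c j * f j $ i) * conjugate (w $ i))"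
    unfolding scalar_prod_def using w by (auto simp: atLeast0LessThan intro!: sum.cong)
  also have "\<dots> = (\<Sum>j<q. c j * (\<Sum>i<k. f j $ i * conjugate (w $ i)))"
    by (simp add: sum_distrib_left sum_distrib_right mult.assoc sum.swap[of _ "{..<k}"])
  also have "\<dots> = (\<Sum>j<q. c j * (f j \<bullet>c w))"
    unfolding scalar_prod_def using w by (auto simp: atLeast0LessThan intro!: sum.cong)
  finally show ?thesis .
qed

context
  fixes dummy :: "'a::{conjugatable_field, real_normed_field} itself"
  assumes K: "\<And>x::'a. x * conjugate x = of_real ((norm x)\<^sup>2)"
begin

lemma conj_of_real: "conjugate (of_real r :: 'a) = of_real r"
proof -
  have pos: "conjugate (of_real s :: 'a) = of_real s" if "s \<ge> 0" for s
  proof -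
    define x :: 'a where "x = of_real (sqrt s)"
    have xx: "x * conjugate x = of_real s" using K[of x] that by (simp add: x_def)
    then have "conjugate (of_real s) = conjugate (x * conjugate x)" by simp
    also have "\<dots> = conjugate x * x" by (simp add: conjugate_dist_mul)
    also have "\<dots> = of_real s" using xx by (simp add: mult.commute)
    finally show ?thesis .
  qed
  show ?thesis
  proof (cases "r \<ge> 0")
    case True then show ?thesis by (rule pos)
  next
    case False
    then have "of_real r = - (of_real (-r) :: 'a)" by simp
    then show ?thesis using pos[of "-r"] False by (simp add: conjugate_neg)
  qed
qed

lemma norm_conj: "norm (conjugate x) = norm (x::'a)"
proof -
  have "of_real ((norm (conjugate x))\<^sup>2) = (of_real ((norm x)\<^sup>2) :: 'a)"
    using K[of "conjugate x"] K[of x] by (simp add: mult.commute)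
  then have "(norm (conjugate x))\<^sup>2 = (norm x)\<^sup>2" using of_real_eq_iff by blast
  then show ?thesis by (metis norm_ge_zero real_sqrt_abs abs_of_nonneg)
qed

lemma ip_self: "x \<bullet>c x = of_real (nsq (x :: 'a vec))"
  unfolding scalar_prod_def nsq_def
  by (auto simp: atLeast0LessThan K of_real_sum intro!: sum.cong)

lemma nsq_zero: assumes "x \<in> carrier_vec k" "nsq (x::'a vec) = 0" shows "x = 0\<^sub>v k"
proof (rule eq_vecI)
  fix i assume "i < dim_vec (0\<^sub>v k :: 'a vec)"
  then have i: "i < dim_vec x" using assms by simp
  have "\<forall>i\<in>{..<dim_vec x}. (norm (x $ i))\<^sup>2 = 0"
    using assms(2) unfolding nsq_def by (subst sum_nonneg_eq_0_iff[symmetric]) auto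
  then show "x $ i = 0\<^sub>v k $ i" using i assms by auto
qed (use assms in auto)

lemma nsq_0[simp]: "nsq (0\<^sub>v k :: 'a vec) = 0"
  unfolding nsq_def by simp

lemma nsq_smult: "nsq (a \<cdot>\<^sub>v (x::'a vec)) = (norm a)\<^sup>2 * nsq x"
  unfolding nsq_def by (simp add: sum_distrib_left norm_mult power_mult_distrib)

lemma ip_conj: "x \<in> carrier_vec k \<Longrightarrow> y \<in> carrier_vec k \<Longrightarrow> y \<bullet>c x = conjugate (x \<bullet>c (y::'a vec))"
  by (metis conjugate_conjugate_sprod conjugate_vec_sprod_comm)

lemma ip_lcomb_right:
  assumes w: "(w::'a vec) \<in> carrier_vec k" and f: "\<And>j. j < q \<Longrightarrow> f j \<in> carrier_vec k"
  shows "w \<bullet>c lcomb k q c f = (\<Sum>j<q. conjugate (c j) * (w \<bullet>c f j))"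
proof -
  have "w \<bullet>c lcomb k q c f = conjugate (lcomb k q c f \<bullet>c (w::'a vec))"
    using ip_conj[OF _ w, of "lcomb k q c f"] by simp
  also have "\<dots> = conjugate (\<Sum>j<q. c j * (f j \<bullet>c w))" by (simp add: ip_lcomb_left[OF w])
  also have "\<dots> = (\<Sum>j<q. conjugate (c j) * conjugate (f j \<bullet>c w))"
    by (simp add: sum_conjugate conjugate_dist_mul)
  also have "\<dots> = (\<Sum>j<q. conjugate (c j) * (w \<bullet>c f j))"
    by (rule sum.cong, simp, metis ip_conj f w lessThan_iff)
  finally show ?thesis .
qed

lemma ON_lcomb_ip: assumes "ON k p e" "j < p"
  shows "lcomb k p c e \<bullet>c e j = (c j :: 'a)"
proof -
  have "lcomb k p c e \<bullet>c e j = (\<Sum>i<p. c i * (if i = j then 1 else 0))"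
    using assms by (simp add: ip_lcomb_left ON_carrier ON_ip)
  also have "\<dots> = (\<Sum>i<p. if i = j then c j else 0)" by (rule sum.cong) auto
  finally show ?thesis using assms by simp
qed

lemma orth_span: assumes "ON k p e" "r \<in> carrier_vec k" "\<And>j. j < p \<Longrightarrow> r \<bullet>c e j = (0::'a)"
  shows "r \<bullet>c lcomb k p c e = 0"
  using assms by (simp add: ip_lcomb_right ON_carrier)

lemma ON_nsq_lcomb: assumes "ON k p e"
  shows "nsq (lcomb k p c e :: 'a vec) = (\<Sum>j<p. (norm (c j))\<^sup>2)"
proof -
  have "(of_real (nsq (lcomb k p c e)) :: 'a) = lcomb k p c e \<bullet>c lcomb k p c e"
    by (simp add: ip_self)
  also have "\<dots> = (\<Sum>j<p. c j * (e j \<bullet>c lcomb k p c e))"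
    by (simp add: ip_lcomb_left)
  also have "\<dots> = (\<Sum>j<p. c j * conjugate (c j))"
    by (rule sum.cong, simp, metis ON_lcomb_ip ON_carrier assms ip_conj lcomb_carrier lessThan_iff)
  also have "\<dots> = of_real (\<Sum>j<p. (norm (c j))\<^sup>2)" by (simp add: K of_real_sum)
  finally show ?thesis using of_real_eq_iff by blast
qed

lemma pyth: assumes "x \<in> carrier_vec k" "y \<in> carrier_vec k" "x \<bullet>c y = (0::'a)"
  shows "nsq (x + y) = nsq x + nsq y"
proof -
  have yx: "y \<bullet>c x = 0" using ip_conj[OF assms(1,2)] assms(3) by simp
  have "(of_real (nsq (x + y)) :: 'a) = (x + y) \<bullet>c (x + y)" by (simp add: ip_self)
  also have "\<dots> = x \<bullet>c x + x \<bullet>c y + (y \<bullet>c x + y \<bullet>c y)"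
    using assms by (simp add: conjugate_add_vec add_scalar_prod_distrib scalar_prod_add_distrib[of _ k])
  also have "\<dots> = of_real (nsq x + nsq y)" using assms(3) yx by (simp add: ip_self)
  finally show ?thesis using of_real_eq_iff by blast
qed

definition "proj k p e y = lcomb k p (\<lambda>j. y \<bullet>c e j) e"

lemma proj_orth: assumes "ON k p e" "y \<in> carrier_vec k" "j < p"
  shows "(y - proj k p e y) \<bullet>c e j = (0::'a)"
  using assms unfolding proj_def
  by (subst minus_scalar_prod_distrib[of _ k], auto simp: ON_carrier ON_lcomb_ip)

lemma proj_dist: assumes "ON k p e" "y \<in> carrier_vec k" "z \<in> spanset k p e"
  shows "nsq (y - z) = nsq y - (\<Sum>j<p. (norm (y \<bullet>c e j))\<^sup>2) + nsq (proj k p e y - z :: 'a vec)"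
proof -
  obtain d where z: "z = lcomb k p d e" using assms(3) unfolding spanset_def by auto
  define r where "r = y - proj k p e y"
  have r: "r \<in> carrier_vec k" unfolding r_def proj_def using assms by simp
  have ro: "\<And>j. j < p \<Longrightarrow> r \<bullet>c e j = 0" unfolding r_def using proj_orth assms by auto
  have Qz: "proj k p e y - z = lcomb k p (\<lambda>j. y \<bullet>c e j - d j) e"
    unfolding proj_def z by (rule lcomb_diff)
  have "y - z = r + (proj k p e y - z)"
    unfolding r_def proj_def z by (rule eq_vecI, use assms in auto)
  then have A: "nsq (y - z) = nsq r + nsq (proj k p e y - z)"
    using pyth[OF r _ orth_span[OF assms(1) r ro]] Qz by simp
  have yr: "y = r + proj k p e y"
    unfolding r_def proj_def by (rule eq_vecI, use assms in auto)
  have "nsq (r + proj k p e y) = nsq r + nsq (proj k p e y)"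
    unfolding proj_def by (rule pyth[OF r _ orth_span[OF assms(1) r ro]], simp)
  moreover have "nsq y = nsq (r + proj k p e y)" using yr by (rule arg_cong)
  moreover have "nsq (proj k p e y) = (\<Sum>j<p. (norm (y \<bullet>c e j))\<^sup>2)"
    unfolding proj_def by (rule ON_nsq_lcomb[OF assms(1)])
  ultimately have "nsq y = nsq r + (\<Sum>j<p. (norm (y \<bullet>c e j))\<^sup>2)" by linarith
  with A show ?thesis by simp
qed

lemma bessel: assumes "ON k p e" "y \<in> carrier_vec k"
  shows "(\<Sum>j<p. (norm (y \<bullet>c e j))\<^sup>2) \<le> nsq (y :: 'a vec)"
proof -
  have "proj k p e y \<in> spanset k p e" unfolding spanset_def proj_def by auto
  from proj_dist[OF assms this]
  have "nsq (y - proj k p e y) = nsq y - (\<Sum>j<p. (norm (y \<bullet>c e j))\<^sup>2) + nsq (proj k p e y - proj k p e y)" .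
  moreover have "proj k p e y - proj k p e y = 0\<^sub>v k" unfolding proj_def by auto
  ultimately show ?thesis using nsq_nonneg[of "y - proj k p e y"] by simp
qed

lemma parseval: assumes "ON k p e" "y \<in> spanset k p e"
  shows "nsq (y :: 'a vec) = (\<Sum>j<p. (norm (y \<bullet>c e j))\<^sup>2)" and "y = proj k p e y"
proof -
  have yc: "y \<in> carrier_vec k" using assms spanset_carrier by blast
  have "y - y = 0\<^sub>v k" using yc by auto
  then have eq: "0 = nsq y - (\<Sum>j<p. (norm (y \<bullet>c e j))\<^sup>2) + nsq (proj k p e y - y)"
    using proj_dist[OF assms(1) yc assms(2)] by simp
  show "nsq y = (\<Sum>j<p. (norm (y \<bullet>c e j))\<^sup>2)"
    using eq bessel[OF assms(1) yc] nsq_nonneg[of "proj k p e y - y"] by linarith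
  then have "nsq (proj k p e y - y) = 0" using eq by linarith
  then have "proj k p e y - y = 0\<^sub>v k" by (rule nsq_zero[rotated], simp add: proj_def yc)
  then have "\<And>i. i < k \<Longrightarrow> (proj k p e y - y) $ i = 0" by simp
  then show "y = proj k p e y" using yc by (intro eq_vecI) (auto simp: proj_def)
qed

end

context
  fixes dummy :: "'a::{conjugatable_field, real_normed_field} itself"
  assumes K: "\<And>x::'a. x * conjugate x = of_real ((norm x)\<^sup>2)"
begin

lemma gs_aux:
  assumes "\<And>j. j < q \<Longrightarrow> (f j :: 'a vec) \<in> carrier_vec k"
  shows "\<exists>p e. p \<le> q \<and> ON k p e \<and> (\<forall>j<q. f j \<in> spanset k p e) \<and> (\<forall>j<p. e j \<in> spanset k q f)"
  using assms
proof (induction q)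
  case 0
  have "ON k 0 f" unfolding ON_def by simp
  then show ?case by blast
next
  case (Suc q)
  from Suc.IH Suc.prems obtain p e where p: "p \<le> q" and on: "ON k p e"
    and fe: "\<forall>j<q. f j \<in> spanset k p e" and ef: "\<forall>j<p. e j \<in> spanset k q f" by auto
  define v where "v = f q"
  have v: "v \<in> carrier_vec k" unfolding v_def using Suc.prems by simp
  define c where "c = (\<lambda>j. v \<bullet>c e j)"
  define L where "L = lcomb k p c e"
  define y where "y = v - L"
  have y: "y \<in> carrier_vec k" unfolding y_def L_def using v by simp
  have yo: "\<And>j. j < p \<Longrightarrow> y \<bullet>c e j = 0"
    unfolding y_def L_def c_def using proj_orth[OF K on v] by (simp add: proj_def[OF K])
  have vyL: "v = L + y" unfolding y_def L_def by (rule eq_vecI, use v in auto)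
  have Lsp: "L \<in> spanset k q f"
    using spanset_comp[of p e k q f] ef unfolding L_def spanset_def by auto
  show ?case
  proof (cases "nsq y = 0")
    case True
    then have "y = 0\<^sub>v k" using nsq_zero[OF K y] by simp
    then have "v = L" using vyL unfolding L_def by simp
    then have "v \<in> spanset k p e" unfolding L_def spanset_def by auto
    then have "\<forall>j<Suc q. f j \<in> spanset k p e" using fe v_def less_Suc_eq by auto
    moreover have "\<forall>j<p. e j \<in> spanset k (Suc q) f" using ef spanset_mono by blast
    ultimately show ?thesis using p on by (intro exI[of _ p] exI[of _ e]) auto
  next
    case False
    define s where "s = sqrt (nsq y)"
    have s: "s > 0" unfolding s_def using False nsq_nonneg[of y] by simp
    define z where "z = (of_real (1/s) :: 'a) \<cdot>\<^sub>v y"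
    have zc: "z \<in> carrier_vec k" unfolding z_def using y by simp
    define e' where "e' = e(p := z)"
    have zo: "\<And>j. j < p \<Longrightarrow> z \<bullet>c e j = 0"
      unfolding z_def using yo on y by (subst smult_scalar_prod_distrib[of _ k]) (auto simp: ON_carrier)
    have oz: "\<And>j. j < p \<Longrightarrow> e j \<bullet>c z = 0"
      using zo ip_conj[OF K zc] on ON_carrier by (metis conjugate_zero)
    have "nsq z = (1/s)\<^sup>2 * nsq y" unfolding z_def nsq_smult[OF K] using s by (simp add: norm_divide)
    also have "\<dots> = 1" unfolding s_def using False nsq_nonneg[of y] by (simp add: power_divide)
    finally have zz: "z \<bullet>c z = 1" by (simp add: ip_self[OF K])
    have on': "ON k (Suc p) e'"
      unfolding ON_def e'_def using on zc zo oz zz by (auto simp: less_Suc_eq ON_carrier ON_ip)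
    have fq: "f q \<in> spanset k (Suc p) e'"
    proof -
      have "lcomb k (Suc p) (c(p := of_real s)) e' = lcomb k p (c(p := of_real s)) e + of_real s \<cdot>\<^sub>v z"
        unfolding e'_def by (subst lcomb_upd_Suc[OF zc]) simp
      also have "lcomb k p (c(p := of_real s)) e = L" unfolding L_def by (rule lcomb_cong) auto
      also have "(of_real s :: 'a) \<cdot>\<^sub>v z = y" unfolding z_def using s
        by (simp add: smult_smult_assoc flip: of_real_mult)
      finally show ?thesis using vyL v_def unfolding spanset_def by (metis rangeI)
    qed
    have fe': "\<forall>j<Suc q. f j \<in> spanset k (Suc p) e'"
      using fe fq spanset_mono_upd[of k p e z] unfolding e'_def by (auto simp: less_Suc_eq)
    obtain d where d: "L = lcomb k q d f" using Lsp unfolding spanset_def by auto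
    have zf: "z \<in> spanset k (Suc q) f"
    proof -
      define g where "g = (\<lambda>i. if i = q then (of_real (1/s) :: 'a) else - of_real (1/s) * d i)"
      have "z = lcomb k (Suc q) g f"
      proof (rule eq_vecI)
        fix i assume "i < dim_vec (lcomb k (Suc q) g f)"
        then have i: "i < k" by simp
        have "lcomb k (Suc q) g f $ i = (\<Sum>j<q. - of_real (1/s) * d j * f j $ i) + of_real (1/s) * f q $ i"
          using i unfolding g_def by (auto intro!: sum.cong)
        also have "\<dots> = of_real (1/s) * (v $ i - L $ i)"
          unfolding d v_def using i by (simp add: algebra_simps sum_distrib_left sum_negf)
        also have "\<dots> = z $ i" unfolding z_def y_def using i v by (simp add: L_def)
        finally show "z $ i = lcomb k (Suc q) g f $ i" by simp
      qed (use zc in simp)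
      then show ?thesis unfolding spanset_def by auto
    qed
    have ef': "\<forall>j<Suc p. e' j \<in> spanset k (Suc q) f"
      using ef zf spanset_mono[of k q f] unfolding e'_def by (auto simp: less_Suc_eq)
    show ?thesis using p on' fe' ef' by (intro exI[of _ "Suc p"] exI[of _ e']) auto
  qed
qed

lemma gram_schmidt:
  assumes "\<And>j. j < q \<Longrightarrow> (f j :: 'a vec) \<in> carrier_vec k"
  shows "\<exists>p e. p \<le> q \<and> ON k p e \<and> spanset k q f = spanset k p e"
proof -
  obtain p e where "p \<le> q" "ON k p e" "\<forall>j<q. f j \<in> spanset k p e" "\<forall>j<p. e j \<in> spanset k q f"
    using gs_aux[of q f k] assms by blast
  then show ?thesis using spanset_comp by (intro exI[of _ p] exI[of _ e]) blast
qed

end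

lemma mat_of_cols_lcomb:
  assumes "\<forall>w\<in>set bs. dim_vec w = n"
  shows "mat_of_cols n bs *\<^sub>v vec (length bs) c = lcomb n (length bs) c (\<lambda>j. bs ! j)"
proof (rule eq_vecI)
  fix i assume "i < dim_vec (lcomb n (length bs) c (\<lambda>j. bs ! j))"
  then have i: "i < n" by simp
  show "(mat_of_cols n bs *\<^sub>v vec (length bs) c) $ i = lcomb n (length bs) c (\<lambda>j. bs ! j) $ i"
    using i by (auto simp: scalar_prod_def row_def atLeast0LessThan mat_of_cols_index mult.commute intro!: sum.cong)
qed simp

lemma (in vec_space) span_list_spanset:
  assumes "set bs \<subseteq> carrier_vec n"
  shows "span (set bs) = spanset n (length bs) (\<lambda>j. bs ! j)"
proof -
  have dims: "\<forall>w\<in>set bs. dim_vec w = n" using assms by auto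
  have "span (set bs) = span_list bs" using span_list_as_span[OF assms] by simp
  also have "\<dots> = spanset n (length bs) (\<lambda>j. bs ! j)"
    unfolding span_list_def spanset_def
    using lincomb_list_as_mat_mult[OF dims] mat_of_cols_lcomb[OF dims] by auto
  finally show ?thesis .
qed

lemma mat_range_spanset:
  assumes "A \<in> carrier_mat k q"
  shows "mat_range A = spanset k q (col A)"
proof -
  have eq: "A *\<^sub>v vec q c = lcomb k q c (col A)" for c
    by (rule eq_vecI, use assms in \<open>auto simp: scalar_prod_def atLeast0LessThan mult.commute intro!: sum.cong\<close>)
  show ?thesis unfolding mat_range_def spanset_def
  proof (intro equalityI subsetI)
    fix x assume "x \<in> {A *\<^sub>v c |c. c \<in> carrier_vec (dim_col A)}"
    then obtain c where x: "x = A *\<^sub>v c" "c \<in> carrier_vec q" using assms by auto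
    then have "c = vec q (\<lambda>j. c $ j)" by auto
    then have "x = lcomb k q (\<lambda>j. c $ j) (col A)" using x eq by metis
    then show "x \<in> range (\<lambda>c. lcomb k q c (col A))" by auto
  next
    fix x assume "x \<in> range (\<lambda>c. lcomb k q c (col A))"
    then obtain c where "x = lcomb k q c (col A)" by auto
    then have "x = A *\<^sub>v vec q c" using eq by simp
    then show "x \<in> {A *\<^sub>v c |c. c \<in> carrier_vec (dim_col A)}" using assms by auto
  qed
qed

lemma subspace_spanset:
  fixes V :: "'a::field vec set"
  assumes "is_subspace n V"
  shows "\<exists>q f. q \<le> subspace_dim n V \<and> (\<forall>j<q. f j \<in> carrier_vec n) \<and> V = spanset n q f"
proof -
  interpret vec_space "TYPE('a)" n .
  have sub: "VectorSpace.subspace class_ring V (module_vec TYPE('a) n)"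
    using assms unfolding is_subspace_def by simp
  have subm: "submodule class_ring V (module_vec TYPE('a) n)" using is_module[OF sub] .
  have Vc: "V \<subseteq> carrier_vec n" using submodule.subset[OF subm] by simp
  have vsV: "vectorspace class_ring (vs V)" using subspace_is_vs[OF sub] .
  let ?P = "\<lambda>T. T \<subseteq> V \<and> lin_indpt T"
  have bound: "finite T \<and> card T \<le> n" if "?P T" for T
  proof -
    have TC: "T \<subseteq> carrier_vec n" using that Vc by auto
    have li: "lin_indpt T" using that by auto
    show ?thesis using li_le_dim[OF fin_dim TC li] dim_is_n by simp
  qed
  have P0: "?P {}" unfolding lin_dep_def by auto
  obtain B where fB: "finite B" and maxB: "maximal B ?P"
    using maximal_exists[of ?P n "{}", OF bound P0] by blast
  have BV: "B \<subseteq> V" and liB: "lin_indpt B" using maxB unfolding maximal_def by auto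
  have BC: "B \<subseteq> carrier_vec n" using BV Vc by auto
  have spanB: "span B = V"
  proof
    show "span B \<subseteq> V" using span_is_subset[OF BV subm] .
    show "V \<subseteq> span B"
    proof
      fix v assume v: "v \<in> V"
      show "v \<in> span B"
      proof (rule ccontr)
        assume nv: "v \<notin> span B"
        have vB: "v \<notin> B" using nv in_own_span[OF BC] by auto
        have "lin_indpt (B \<union> {v})"
          using lin_dep_iff_in_span[OF BC liB _ vB] v Vc nv by auto
        then have "?P (B \<union> {v})" using BV v by auto
        then have "B \<union> {v} = B" using maxB unfolding maximal_def by blast
        then show False using vB by auto
      qed
    qed
  qed
  have gen: "LinearCombinations.module.span class_ring (vs V) B = carrier (vs V)"
    using span_li_not_depend(1)[OF BV subm] spanB by simp
  have li': "\<not> LinearCombinations.module.lin_dep class_ring (vs V) B"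
    using span_li_not_depend(2)[OF BV subm] liB by simp
  have "vectorspace.basis class_ring (vs V) B"
    unfolding vectorspace.basis_def[OF vsV] using gen li' BV by simp
  then have dimB: "subspace_dim n V = card B"
    unfolding subspace_dim_def using vectorspace.dim_basis[OF vsV fB] by simp
  obtain bs where bs: "set bs = B" "distinct bs" using finite_distinct_list[OF fB] by blast
  have bsC: "set bs \<subseteq> carrier_vec n" using bs BC by simp
  have "span (set bs) = spanset n (length bs) (\<lambda>j. bs ! j)"
    by (rule span_list_spanset[OF bsC])
  then have Veq: "V = spanset n (length bs) (\<lambda>j. bs ! j)" using bs(1) spanB by simp
  have len: "length bs = subspace_dim n V" using dimB distinct_card[OF bs(2)] bs(1) by simp
  have cb: "\<forall>j<length bs. bs ! j \<in> carrier_vec n" using bsC by auto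
  show ?thesis
    by (rule exI[of _ "length bs"], rule exI[of _ "\<lambda>j. bs ! j"], use Veq len cb in simp)
qed

lemma lcomb_cong_f: "(\<And>j. j < q \<Longrightarrow> f j = g j) \<Longrightarrow> lcomb k q c f = lcomb k q c g"
  by (rule eq_vecI, auto intro!: sum.cong)

lemma spanset_cong_f: "(\<And>j. j < q \<Longrightarrow> f j = g j) \<Longrightarrow> spanset k q f = spanset k q g"
  unfolding spanset_def using lcomb_cong_f[of q f g k] by simp

lemma cols_in_span_orth:
  fixes A :: "'a::conjugatable_field mat"
  assumes A: "A \<in> carrier_mat k m" and l: "l = vec_space.rank k A"
    and bA: "\<And>j. j < l \<Longrightarrow> b j \<in> mat_range A"
    and orth: "\<And>i j. i < l \<Longrightarrow> j < l \<Longrightarrow> i \<noteq> j \<Longrightarrow> b i \<bullet>c b j = 0"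
    and nz: "\<And>j. j < l \<Longrightarrow> b j \<bullet>c b j \<noteq> 0"
  shows "\<forall>i<m. col A i \<in> spanset k l b"
proof -
  interpret vec_space "TYPE('a)" k .
  define W where "W = span (set (cols A))"
  have colsC: "set (cols A) \<subseteq> carrier_vec k" using A by (auto simp: cols_def)
  have cs: "col_space A = W" unfolding W_def col_space_def ..
  have Weq: "mat_range A = W"
    unfolding cs[symmetric] col_space_eq[OF A]
  proof (intro equalityI subsetI)
    fix y assume "y \<in> mat_range A"
    then obtain c where y: "y = A *\<^sub>v c" "c \<in> carrier_vec (dim_col A)" unfolding mat_range_def by blast
    have "dim_vec y = dim_row A" unfolding y by simp
    then have "y \<in> carrier_vec (dim_row A)" by (rule carrier_vecI)
    then show "y \<in> {y \<in> carrier_vec (dim_row A). \<exists>x\<in>carrier_vec (dim_col A). A *\<^sub>v x = y}"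
      using y by blast
  next
    fix y assume "y \<in> {y \<in> carrier_vec (dim_row A). \<exists>x\<in>carrier_vec (dim_col A). A *\<^sub>v x = y}"
    then show "y \<in> mat_range A" unfolding mat_range_def by blast
  qed
  have bC: "b j \<in> carrier_vec k" if jl: "j < l" for j
  proof -
    have "b j \<in> {A *\<^sub>v c |c. c \<in> carrier_vec (dim_col A)}" using bA[OF jl] unfolding mat_range_def .
    then obtain c where bc: "b j = A *\<^sub>v c" by blast
    have "dim_vec (A *\<^sub>v c) = k" using A by simp
    then show ?thesis unfolding bc by (rule carrier_vecI)
  qed
  define S where "S = b ` {..<l}"
  have SW: "S \<subseteq> W" unfolding S_def using bA Weq by auto
  have SC: "S \<subseteq> carrier_vec k" unfolding S_def using bC by auto
  have inj: "inj_on b {..<l}"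
  proof (rule inj_onI)
    fix i j assume "i \<in> {..<l}" "j \<in> {..<l}" "b i = b j"
    then show "i = j" using orth[of i j] nz[of i] by auto
  qed
  have cardS: "card S = l" unfolding S_def using card_image[OF inj] by simp
  have finS: "finite S" unfolding S_def by simp
  have liS: "lin_indpt S"
  proof
    assume "lin_dep S"
    then obtain A' a v where A': "finite A'" "A' \<subseteq> S" "lincomb a A' = 0\<^sub>v k" "v \<in> A'" "a v \<noteq> 0"
      unfolding lin_dep_def by auto
    have A'C: "A' \<subseteq> carrier_vec k" using A' SC by auto
    have vC: "v \<in> carrier_vec k" using A' A'C by auto
    have "lincomb a A' \<bullet>c v = (\<Sum>i<k. (\<Sum>u\<in>A'. a u * u $ i) * conjugate (v $ i))"
      unfolding scalar_prod_def using vC lincomb_index[OF _ A'C]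
      by (auto simp: atLeast0LessThan intro!: sum.cong)
    also have "\<dots> = (\<Sum>u\<in>A'. a u * (\<Sum>i<k. u $ i * conjugate (v $ i)))"
      by (simp add: sum_distrib_left sum_distrib_right mult.assoc sum.swap[of _ "{..<k}"])
    also have "\<dots> = (\<Sum>u\<in>A'. a u * (u \<bullet>c v))"
      unfolding scalar_prod_def using vC by (auto simp: atLeast0LessThan intro!: sum.cong)
    also have "\<dots> = a v * (v \<bullet>c v) + (\<Sum>u\<in>A' - {v}. a u * (u \<bullet>c v))"
      using A'(1,4) by (simp add: sum.remove)
    also have "(\<Sum>u\<in>A' - {v}. a u * (u \<bullet>c v)) = 0"
    proof (rule sum.neutral, rule ballI)
      fix u assume u: "u \<in> A' - {v}"
      then obtain i j where "u = b i" "v = b j" "i < l" "j < l" using A' unfolding S_def by blast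
      then show "a u * (u \<bullet>c v) = 0" using orth u by auto
    qed
    finally have "a v * (v \<bullet>c v) = 0" using A'(3) vC by simp
    moreover have "v \<bullet>c v \<noteq> 0" using A' nz unfolding S_def by auto
    ultimately show False using A'(5) by simp
  qed
  have subW: "submodule class_ring W V" unfolding W_def by (rule span_is_submodule[OF colsC])
  have vsW: "vectorspace class_ring (vs W)"
    unfolding W_def using subspace_is_vs[OF span_is_subspace[OF colsC]] .
  have fdW: "vectorspace.fin_dim class_ring (vs W)" unfolding W_def by (rule fin_dim_span_cols[OF A])
  have dimW: "vectorspace.dim class_ring (vs W) = l" unfolding W_def l rank_def by simp
  have li': "\<not> LinearCombinations.module.lin_dep class_ring (vs W) S"
    using span_li_not_depend(2)[OF SW subW] liS by simp
  have "vectorspace.basis class_ring (vs W) S"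
    by (rule vectorspace.dim_li_is_basis[OF vsW fdW finS], use SW li' dimW cardS in auto)
  then have "LinearCombinations.module.span class_ring (vs W) S = W"
    unfolding vectorspace.basis_def[OF vsW] by simp
  then have spanS: "span S = W" using span_li_not_depend(1)[OF SW subW] by simp
  define bl where "bl = map b [0..<l]"
  have blS: "set bl = S" unfolding bl_def S_def by auto
  have blC: "set bl \<subseteq> carrier_vec k" using blS SC by simp
  have "span (set bl) = spanset k (length bl) (\<lambda>j. bl ! j)" by (rule span_list_spanset[OF blC])
  also have "length bl = l" unfolding bl_def by simp
  also have "spanset k l (\<lambda>j. bl ! j) = spanset k l b"
    by (rule spanset_cong_f) (simp add: bl_def)
  finally have spb: "span S = spanset k l b" using blS by simp
  show ?thesis
  proof (intro allI impI)
    fix i assume i: "i < m"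
    have il: "i < length (cols A)" using i A by simp
    have "cols A ! i \<in> set (cols A)" by (rule nth_mem[OF il])
    moreover have "cols A ! i = col A i" using i A by simp
    ultimately have "col A i \<in> set (cols A)" by simp
    then have "col A i \<in> W" using in_own_span[OF colsC] unfolding W_def by blast
    then show "col A i \<in> spanset k l b" using spanS spb by simp
  qed
qed

lemma adj_apply:
  assumes A: "A \<in> carrier_mat k m" and y: "y \<in> carrier_vec k" and i: "i < m"
  shows "(mat_adjoint A *\<^sub>v y) $ i = y \<bullet>c col A i"
proof -
  have d: "dim_row (mat_adjoint A) = m" using A unfolding mat_adjoint_def by simp
  have r: "row (mat_adjoint A) i = conjugate (col A i)"
    unfolding mat_adjoint_def using A i by (subst mat_of_rows_row) auto
  have "(mat_adjoint A *\<^sub>v y) $ i = conjugate (col A i) \<bullet> y" using i d r by simp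
  also have "\<dots> = y \<bullet>c col A i" using A y by (subst comm_scalar_prod[of _ k]) auto
  finally show ?thesis .
qed

lemma mat_adjoint_carrier: "A \<in> carrier_mat k m \<Longrightarrow> mat_adjoint A \<in> carrier_mat m k"
  unfolding mat_adjoint_def by auto

lemma Theta_lcomb:
  assumes T: "\<Theta> \<in> carrier_mat k n" and f: "\<And>j. j < q \<Longrightarrow> f j \<in> carrier_vec n"
  shows "\<Theta> *\<^sub>v lcomb n q c f = lcomb k q c (\<lambda>j. \<Theta> *\<^sub>v f j)"
proof (rule eq_vecI)
  fix i assume "i < dim_vec (lcomb k q c (\<lambda>j. \<Theta> *\<^sub>v f j))"
  then have i: "i < k" by simp
  have fd: "\<And>j. j < q \<Longrightarrow> dim_vec (f j) = n" using f by auto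
  have "(\<Theta> *\<^sub>v lcomb n q c f) $ i = (\<Sum>r<n. \<Theta> $$ (i, r) * (\<Sum>j<q. c j * f j $ r))"
    using T i by (auto simp: scalar_prod_def row_def atLeast0LessThan intro!: sum.cong)
  also have "\<dots> = (\<Sum>j<q. c j * (\<Sum>r<n. \<Theta> $$ (i, r) * f j $ r))"
    by (simp add: sum_distrib_left sum_distrib_right mult.left_commute sum.swap[of _ "{..<n}"])
  also have "\<dots> = lcomb k q c (\<lambda>j. \<Theta> *\<^sub>v f j) $ i"
    using T i fd by (auto simp: scalar_prod_def row_def atLeast0LessThan intro!: sum.cong)
  finally show "(\<Theta> *\<^sub>v lcomb n q c f) $ i = lcomb k q c (\<lambda>j. \<Theta> *\<^sub>v f j) $ i" .
qed (use T in simp)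

lemma Theta_spanset:
  assumes T: "\<Theta> \<in> carrier_mat k n" and f: "\<And>j. j < q \<Longrightarrow> f j \<in> carrier_vec n"
  shows "(\<lambda>v. \<Theta> *\<^sub>v v) ` spanset n q f = spanset k q (\<lambda>j. \<Theta> *\<^sub>v f j)"
  unfolding spanset_def using Theta_lcomb[OF T f] by (auto simp: image_image)

lemma ON_mono: "ON k p e \<Longrightarrow> r \<le> p \<Longrightarrow> ON k r e"
  unfolding ON_def by auto

lemma spanset_scale:
  assumes "\<And>j. j < q \<Longrightarrow> f j = d j \<cdot>\<^sub>v g j" "\<And>j. j < q \<Longrightarrow> (d j :: 'a::field) \<noteq> 0"
    "\<And>j. j < q \<Longrightarrow> g j \<in> carrier_vec k"
  shows "spanset k q f = spanset k q g"
proof -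
  have fi: "f j $ i = d j * g j $ i" if "j < q" "i < k" for i j
    using assms(1)[OF that(1)] assms(3)[OF that(1)] that(2) by simp
  have 1: "lcomb k q c f = lcomb k q (\<lambda>j. c j * d j) g" for c
    by (rule eq_vecI, auto intro!: sum.cong simp: fi mult.assoc)
  have 2: "lcomb k q c g = lcomb k q (\<lambda>j. c j / d j) f" for c
    by (rule eq_vecI, auto intro!: sum.cong simp: fi assms(2))
  show ?thesis unfolding spanset_def
  proof (intro equalityI subsetI)
    fix x assume "x \<in> range (\<lambda>c. lcomb k q c f)"
    then show "x \<in> range (\<lambda>c. lcomb k q c g)" using 1 by auto
  next
    fix x assume "x \<in> range (\<lambda>c. lcomb k q c g)"
    then show "x \<in> range (\<lambda>c. lcomb k q c f)" using 2 by auto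
  qed
qed

lemma ip_smult:
  assumes "x \<in> carrier_vec k" "y \<in> carrier_vec k"
  shows "(a \<cdot>\<^sub>v x) \<bullet>c (c \<cdot>\<^sub>v y) = a * conjugate c * (x \<bullet>c (y :: 'a::conjugatable_field vec))"
  using assms by (simp add: conjugate_smult_vec smult_scalar_prod_distrib[of _ k] scalar_prod_smult_distrib[of _ k] mult.assoc)

lemma kyfan_real:
  fixes lam c :: "nat \<Rightarrow> real"
  assumes sorted: "\<And>i j. i \<le> j \<Longrightarrow> j < l \<Longrightarrow> lam j \<le> lam i"
    and pos: "\<And>j. j < l \<Longrightarrow> lam j \<ge> 0"
    and c0: "\<And>j. j < l \<Longrightarrow> c j \<ge> 0" and c1: "\<And>j. j < l \<Longrightarrow> c j \<le> 1"
    and cs: "(\<Sum>j<l. c j) \<le> real r" and r: "r \<le> l"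
  shows "(\<Sum>j<l. lam j * c j) \<le> (\<Sum>j<r. lam j)"
proof -
  define \<mu> where "\<mu> = (if r < l then lam r else 0)"
  have mu0: "\<mu> \<ge> 0" unfolding \<mu>_def using pos by auto
  have each: "lam j * c j - (if j < r then lam j else 0) \<le> \<mu> * c j - (if j < r then \<mu> else 0)"
    if j: "j < l" for j
  proof (cases "j < r")
    case True
    have "\<mu> \<le> lam j" unfolding \<mu>_def using True sorted[of j r] pos[OF j] by auto
    then have "(lam j - \<mu>) * (c j - 1) \<le> 0" using c1[OF j]
      by (intro mult_nonneg_nonpos) auto
    then show ?thesis using True by (simp add: algebra_simps)
  next
    case False
    then have "r < l" using j by simp
    then have "lam j \<le> \<mu>" unfolding \<mu>_def using False sorted[of r j] j by auto
    then have "lam j * c j \<le> \<mu> * c j" using c0[OF j] by (intro mult_right_mono) auto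
    then show ?thesis using False by simp
  qed
  have "(\<Sum>j<l. lam j * c j) - (\<Sum>j<r. lam j) = (\<Sum>j<l. lam j * c j - (if j < r then lam j else 0))"
  proof -
    have "(\<Sum>j<l. (if j < r then lam j else 0)) = (\<Sum>j<r. lam j)"
    proof -
      have "(\<Sum>j<l. (if j < r then lam j else 0)) = (\<Sum>j\<in>{x\<in>{..<l}. x < r}. lam j)"
        by (subst sum.inter_filter) auto
      also have "{x\<in>{..<l}. x < r} = {..<r}" using r by auto
      finally show ?thesis .
    qed
    then show ?thesis by (simp add: sum_subtractf)
  qed
  also have "\<dots> \<le> (\<Sum>j<l. \<mu> * c j - (if j < r then \<mu> else 0))"
    by (rule sum_mono) (use each in auto)
  also have "\<dots> = \<mu> * (\<Sum>j<l. c j) - \<mu> * real r"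
  proof -
    have "(\<Sum>j<l. (if j < r then \<mu> else 0)) = (\<Sum>j\<in>{x\<in>{..<l}. x < r}. \<mu>)"
      by (subst sum.inter_filter) auto
    also have "{x\<in>{..<l}. x < r} = {..<r}" using r by auto
    finally have "(\<Sum>j<l. (if j < r then \<mu> else 0)) = \<mu> * real r" by simp
    then show ?thesis by (simp add: sum_subtractf sum_distrib_left)
  qed
  also have "\<dots> \<le> 0"
  proof -
    have "(\<Sum>j<l. c j) - real r \<le> 0" using cs by simp
    then have "\<mu> * ((\<Sum>j<l. c j) - real r) \<le> 0" using mu0 by (rule mult_nonneg_nonpos[rotated])
    then show ?thesis by (simp add: right_diff_distrib)
  qed
  finally show ?thesis by simp
qed

context
  fixes dummy :: "'a::{conjugatable_field, real_normed_field} itself"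
  assumes K: "\<And>x::'a. x * conjugate x = of_real ((norm x)\<^sup>2)"
begin

lemma theta_proj_value:
  fixes \<Theta> :: "'a mat"
  assumes T: "\<Theta> \<in> carrier_mat k n" and Vc: "V \<subseteq> carrier_vec n"
    and img: "(\<lambda>v. \<Theta> *\<^sub>v v) ` V = spanset k p e" and on: "ON k p e" and x: "x \<in> carrier_vec n"
  shows "(vnorm (\<Theta> *\<^sub>v (x - theta_proj \<Theta> V x)))\<^sup>2
           = nsq (\<Theta> *\<^sub>v x) - (\<Sum>j<p. (norm ((\<Theta> *\<^sub>v x) \<bullet>c e j))\<^sup>2)"
proof -
  define y where "y = \<Theta> *\<^sub>v x"
  have yc: "y \<in> carrier_vec k" unfolding y_def using T x by simp
  define S where "S = (\<Sum>j<p. (norm (y \<bullet>c e j))\<^sup>2)"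
  define Q where "Q = proj k p e y"
  have Qs: "Q \<in> spanset k p e" unfolding Q_def proj_def[OF K] spanset_def by auto
  then obtain w0 where w0: "w0 \<in> V" "\<Theta> *\<^sub>v w0 = Q" using img by (metis imageE)
  have key: "nsq (\<Theta> *\<^sub>v (x - w)) = nsq y - S + nsq (Q - \<Theta> *\<^sub>v w)" if w: "w \<in> V" for w
  proof -
    have wc: "w \<in> carrier_vec n" using w Vc by auto
    have "\<Theta> *\<^sub>v (x - w) = y - \<Theta> *\<^sub>v w" unfolding y_def by (rule mult_minus_distrib_mat_vec[OF T x wc])
    moreover have "\<Theta> *\<^sub>v w \<in> spanset k p e" using img w by blast
    ultimately show ?thesis using proj_dist[OF K on yc] unfolding S_def Q_def by simp
  qed
  have low: "nsq y - S \<le> nsq (\<Theta> *\<^sub>v (x - w))" if "w \<in> V" for w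
    using key[OF that] nsq_nonneg[of "Q - \<Theta> *\<^sub>v w"] by linarith
  have Qc: "Q \<in> carrier_vec k" using Qs spanset_carrier by blast
  have at0: "nsq (\<Theta> *\<^sub>v (x - w0)) = nsq y - S"
  proof -
    have "Q - Q = 0\<^sub>v k" using Qc by simp
    then show ?thesis using key[OF w0(1)] w0(2) nsq_0[OF K] by simp
  qed
  have min0: "\<forall>w'\<in>V. vnorm (\<Theta> *\<^sub>v (x - w0)) \<le> vnorm (\<Theta> *\<^sub>v (x - w'))"
    using low at0 by (auto simp: vnorm_nsq)
  have "theta_proj \<Theta> V x \<in> V \<and>
      (\<forall>w'\<in>V. vnorm (\<Theta> *\<^sub>v (x - theta_proj \<Theta> V x)) \<le> vnorm (\<Theta> *\<^sub>v (x - w')))"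
    unfolding theta_proj_def by (rule someI[of _ w0]) (use w0 min0 in simp)
  then have tp: "theta_proj \<Theta> V x \<in> V"
    and le: "vnorm (\<Theta> *\<^sub>v (x - theta_proj \<Theta> V x)) \<le> vnorm (\<Theta> *\<^sub>v (x - w0))" using w0 by auto
  have "nsq (\<Theta> *\<^sub>v (x - theta_proj \<Theta> V x)) \<le> nsq (\<Theta> *\<^sub>v (x - w0))"
    using le by (simp add: vnorm_nsq nsq_nonneg)
  then have "nsq (\<Theta> *\<^sub>v (x - theta_proj \<Theta> V x)) = nsq y - S" using at0 low[OF tp] by linarith
  then show ?thesis unfolding vnorm_sq S_def y_def .
qed

end

theorem proposition5p3:
  fixes n m k l r :: nat
    and U :: "'a::{conjugatable_field, real_normed_field} mat"
    and \<Theta> :: "'a mat"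
    and lam :: "nat \<Rightarrow> real"
    and t :: "nat \<Rightarrow> 'a vec"
  assumes K_is_R_or_C: "\<And>x::'a. x * conjugate x = of_real ((norm x)\<^sup>2)"
    and U: "U \<in> carrier_mat n m"
    and Theta: "\<Theta> \<in> carrier_mat k n"
    and l_def: "l = vec_space.rank k (\<Theta> * U)"
    and eig: "\<And>i. i < l \<Longrightarrow>
        eigenvector (mat_adjoint (\<Theta> * U) * (\<Theta> * U)) (t i) (of_real (lam i)) \<and> lam i \<noteq> 0"
    and orthonormal: "\<And>i j. i < l \<Longrightarrow> j < l \<Longrightarrow> t i \<bullet>c t j = (if i = j then 1 else 0)"
    and sorted: "\<And>i j. i \<le> j \<Longrightarrow> j < l \<Longrightarrow> lam j \<le> lam i"
    and r: "r \<le> l"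
  shows "delta_pod \<Theta> U (mat_range (U * mat m r (\<lambda>(i, j). t j $ i)))
           = (1 / real m) * (\<Sum>i\<in>{r..<l}. lam i)
       \<and> (\<forall>V. is_subspace n V \<and> V \<subseteq> mat_range U \<and> subspace_dim n V \<le> r \<longrightarrow>
            delta_pod \<Theta> U (mat_range (U * mat m r (\<lambda>(i, j). t j $ i))) \<le> delta_pod \<Theta> U V)"
proof -
  note K = K_is_R_or_C
  define A where "A = \<Theta> * U"
  have A: "A \<in> carrier_mat k m" unfolding A_def using Theta U by simp
  define G where "G = mat_adjoint A * A"
  have G: "G \<in> carrier_mat m m" unfolding G_def using A mat_adjoint_carrier[OF A] by simp
  have ev: "eigenvector G (t j) (of_real (lam j)) \<and> lam j \<noteq> 0" if "j < l" for j
    using eig[OF that] unfolding G_def A_def .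
  have tc: "t j \<in> carrier_vec m" if "j < l" for j
  proof -
    have "t j \<in> carrier_vec (dim_row G)" using ev[OF that] unfolding eigenvector_def by blast
    then show ?thesis using G by simp
  qed
  have Gt: "G *\<^sub>v t j = of_real (lam j) \<cdot>\<^sub>v t j" if "j < l" for j
    using ev[OF that] unfolding eigenvector_def by blast
  have lnz: "lam j \<noteq> 0" if "j < l" for j using ev[OF that] by blast
  have colAc: "col A i \<in> carrier_vec k" for i using col_dim[of A i] A by simp
  define b where "b j = A *\<^sub>v t j" for j
  have bc: "b j \<in> carrier_vec k" for j
  proof -
    have "dim_vec (b j) = k" unfolding b_def using A by simp
    then show ?thesis by (rule carrier_vecI)
  qed
  have F1: "b j \<bullet>c col A i = of_real (lam j) * t j $ i" if i: "i < m" and j: "j < l" for i j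
  proof -
    have "(G *\<^sub>v t j) $ i = (mat_adjoint A *\<^sub>v b j) $ i"
      unfolding G_def b_def using A mat_adjoint_carrier[OF A] tc[OF j] by simp
    also have "\<dots> = b j \<bullet>c col A i" by (rule adj_apply[OF A bc i])
    finally show ?thesis using Gt[OF j] tc[OF j] i by simp
  qed
  have ONt: "ON m l t" unfolding ON_def using tc orthonormal by auto
  have tip: "t j \<bullet>c t j' = (\<Sum>i<m. t j $ i * conjugate (t j' $ i))" if "j' < l" for j j'
    using tc[OF that] by (auto simp: scalar_prod_def atLeast0LessThan intro!: sum.cong)
  have Ab: "b j = lcomb k m (\<lambda>i. t j $ i) (col A)" if "j < l" for j
    unfolding b_def by (rule eq_vecI) (use A tc[OF that] in \<open>auto simp: scalar_prod_def atLeast0LessThan mult.commute intro!: sum.cong\<close>)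
  have F2: "b j \<bullet>c b j' = of_real (lam j) * (if j = j' then 1 else 0)" if j: "j < l" and j': "j' < l" for j j'
  proof -
    have "b j \<bullet>c b j' = (\<Sum>i<m. conjugate (t j' $ i) * (b j \<bullet>c col A i))"
      unfolding Ab[OF j'] by (rule ip_lcomb_right[OF K bc colAc])
    also have "\<dots> = (\<Sum>i<m. of_real (lam j) * (t j $ i * conjugate (t j' $ i)))"
      by (rule sum.cong) (auto simp: F1 j)
    also have "\<dots> = of_real (lam j) * (t j \<bullet>c t j')" by (simp add: tip[OF j'] sum_distrib_left)
    finally show ?thesis using orthonormal[OF j j'] by simp
  qed
  have lampos: "lam j > 0" if j: "j < l" for j
  proof -
    have "(of_real (nsq (b j)) :: 'a) = of_real (lam j)" using F2[OF j j] ip_self[OF K, of "b j"] by simp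
    then have "nsq (b j) = lam j" using of_real_eq_iff by blast
    then show ?thesis using nsq_nonneg[of "b j"] lnz[OF j] by simp
  qed
  define s where "s j = sqrt (lam j)" for j
  have spos: "s j > 0" if "j < l" for j unfolding s_def using lampos[OF that] by simp
  have ss: "s j * s j = lam j" if "j < l" for j unfolding s_def using lampos[OF that] by simp
  define e where "e j = (of_real (1 / s j) :: 'a) \<cdot>\<^sub>v b j" for j
  have ec: "e j \<in> carrier_vec k" for j unfolding e_def using bc by simp
  have ONe: "ON k l e"
  proof -
    have "e i \<bullet>c e j = (if i = j then 1 else 0)" if i: "i < l" and j: "j < l" for i j
    proof -
      have "e i \<bullet>c e j = of_real (1 / s i) * conjugate (of_real (1 / s j)) * (b i \<bullet>c b j)"
        unfolding e_def by (rule ip_smult[OF bc bc])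
      also have "\<dots> = of_real (1 / s i * (1 / s j) * lam i) * (if i = j then 1 else 0)"
        unfolding conj_of_real[OF K] F2[OF i j] by (simp only: of_real_mult mult.assoc)
      also have "1 / s i * (1 / s j) * lam i = (if i = j then 1 else 1 / s i * (1 / s j) * lam i)"
        using ss[OF i] spos[OF i] by (auto simp: field_simps)
      finally show ?thesis by simp
    qed
    then show ?thesis unfolding ON_def using ec by auto
  qed
  have be: "b j = (of_real (s j) :: 'a) \<cdot>\<^sub>v e j" if "j < l" for j
    unfolding e_def using spos[OF that] bc by (simp add: smult_smult_assoc flip: of_real_mult)
  have F5: "col A i \<bullet>c e j = of_real (s j) * conjugate (t j $ i)" if i: "i < m" and j: "j < l" for i j
  proof -
    have "e j \<bullet>c col A i = of_real (1 / s j) * (b j \<bullet>c col A i)"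
      unfolding e_def using bc colAc by (subst smult_scalar_prod_distrib[of _ k]) auto
    also have "\<dots> = of_real (s j) * t j $ i"
      using ss[OF j] spos[OF j] by (simp add: F1[OF i j] field_simps flip: of_real_mult)
    finally have "e j \<bullet>c col A i = of_real (s j) * t j $ i" .
    moreover have "col A i \<bullet>c e j = conjugate (e j \<bullet>c col A i)" by (rule ip_conj[OF K ec colAc])
    ultimately show ?thesis by (simp add: conjugate_dist_mul conj_of_real[OF K])
  qed
  have F5n: "(norm (col A i \<bullet>c e j))\<^sup>2 = lam j * (norm (t j $ i))\<^sup>2" if i: "i < m" and j: "j < l" for i j
    using ss[OF j] spos[OF j]
    by (simp add: F5[OF i j] norm_mult norm_conj[OF K] power_mult_distrib power2_eq_square)
  have bR: "b j \<in> mat_range A" if "j < l" for j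
    unfolding mat_range_def b_def using tc[OF that] A by auto
  have spb: "\<forall>i<m. col A i \<in> spanset k l b"
  proof (rule cols_in_span_orth[OF A])
    show "l = vec_space.rank k A" unfolding A_def by (rule l_def)
    show "\<And>j. j < l \<Longrightarrow> b j \<in> mat_range A" by (rule bR)
    show "\<And>i j. i < l \<Longrightarrow> j < l \<Longrightarrow> i \<noteq> j \<Longrightarrow> b i \<bullet>c b j = 0" using F2 by simp
    show "\<And>j. j < l \<Longrightarrow> b j \<bullet>c b j \<noteq> 0" using F2 lnz by simp
  qed
  have sbe: "spanset k l b = spanset k l e"
  proof (rule spanset_scale[OF be])
    fix j assume j: "j < l"
    show "(of_real (s j) :: 'a) \<noteq> 0" using spos[OF j] by simp
    show "e j \<in> carrier_vec k" by (rule ec)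
  qed
  have colsp: "col A i \<in> spanset k l e" if "i < m" for i using spb sbe that by auto
  have colA: "col A i = \<Theta> *\<^sub>v col U i" if "i < m" for i
    unfolding A_def by (rule col_mult2[OF Theta U that])
  have nsqA: "nsq (col A i) = (\<Sum>j<l. lam j * (norm (t j $ i))\<^sup>2)" if i: "i < m" for i
    using parseval(1)[OF K ONe colsp[OF i]] F5n[OF i] by simp
  have tn: "(\<Sum>i<m. (norm (t j $ i))\<^sup>2) = 1" if j: "j < l" for j
  proof -
    have "(of_real (nsq (t j)) :: 'a) = 1" using ip_self[OF K, of "t j"] orthonormal[OF j j] by simp
    then have "nsq (t j) = 1" by (metis of_real_1 of_real_eq_iff)
    then show ?thesis unfolding nsq_def using tc[OF j] by simp
  qed
  have totA: "(\<Sum>i<m. nsq (col A i)) = (\<Sum>j<l. lam j)"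
  proof -
    have "(\<Sum>i<m. nsq (col A i)) = (\<Sum>i<m. \<Sum>j<l. lam j * (norm (t j $ i))\<^sup>2)" by (simp add: nsqA)
    also have "\<dots> = (\<Sum>j<l. lam j * (\<Sum>i<m. (norm (t j $ i))\<^sup>2))"
      by (subst sum.swap) (simp add: sum_distrib_left)
    also have "\<dots> = (\<Sum>j<l. lam j)" by (simp add: tn)
    finally show ?thesis .
  qed
  have KEY: "(\<Sum>i<m. (norm (col A i \<bullet>c w))\<^sup>2) = (\<Sum>j<l. lam j * (norm (e j \<bullet>c w))\<^sup>2)"
    if w: "w \<in> carrier_vec k" for w
  proof -
    define X where "X j = (of_real (s j) :: 'a) * (e j \<bullet>c w)" for j
    define L where "L = lcomb m l (\<lambda>j. conjugate (X j)) t"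
    have "col A i \<bullet>c w = conjugate (L $ i)" if i: "i < m" for i
    proof -
      have "col A i = proj k l e (col A i)" using parseval(2)[OF K ONe colsp[OF i]] .
      then have "col A i = lcomb k l (\<lambda>j. col A i \<bullet>c e j) e" unfolding proj_def[OF K] .
      then have "col A i \<bullet>c w = lcomb k l (\<lambda>j. col A i \<bullet>c e j) e \<bullet>c w" by simp
      also have "\<dots> = (\<Sum>j<l. (col A i \<bullet>c e j) * (e j \<bullet>c w))" by (rule ip_lcomb_left[OF w])
      also have "\<dots> = (\<Sum>j<l. conjugate (t j $ i) * X j)"
        by (rule sum.cong) (auto simp: F5[OF i] X_def mult.commute mult.left_commute)
      also have "\<dots> = conjugate (\<Sum>j<l. conjugate (X j) * t j $ i)"
        by (simp add: sum_conjugate conjugate_dist_mul mult.commute)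
      also have "\<dots> = conjugate (L $ i)" unfolding L_def using i by simp
      finally show ?thesis .
    qed
    then have "(\<Sum>i<m. (norm (col A i \<bullet>c w))\<^sup>2) = (\<Sum>i<m. (norm (L $ i))\<^sup>2)"
      by (intro sum.cong) (auto simp: norm_conj[OF K])
    also have "\<dots> = nsq L" unfolding nsq_def L_def by simp
    also have "\<dots> = (\<Sum>j<l. (norm (conjugate (X j)))\<^sup>2)" unfolding L_def by (rule ON_nsq_lcomb[OF K ONt])
    also have "\<dots> = (\<Sum>j<l. lam j * (norm (e j \<bullet>c w))\<^sup>2)"
    proof (rule sum.cong)
      fix j assume "j \<in> {..<l}"
      then have j: "j < l" by simp
      show "(norm (conjugate (X j)))\<^sup>2 = lam j * (norm (e j \<bullet>c w))\<^sup>2"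
        using ss[OF j] spos[OF j]
        by (simp add: X_def norm_conj[OF K] norm_mult power_mult_distrib power2_eq_square)
    qed simp
    finally show ?thesis .
  qed
  have dimU: "dim_col U = m" using U by simp
  have colUc: "col U i \<in> carrier_vec n" for i using col_dim[of U i] U by simp
  have delta_eq: "delta_pod \<Theta> U V = (1 / real m) * ((\<Sum>j<l. lam j) - (\<Sum>i<m. \<Sum>j<p. (norm (col A i \<bullet>c ee j))\<^sup>2))"
    if VC: "V \<subseteq> carrier_vec n" and img: "(\<lambda>v. \<Theta> *\<^sub>v v) ` V = spanset k p ee" and on: "ON k p ee" for V p ee
  proof -
    have "(\<Sum>i<m. (vnorm (\<Theta> *\<^sub>v (col U i - theta_proj \<Theta> V (col U i))))\<^sup>2)
        = (\<Sum>i<m. nsq (col A i) - (\<Sum>j<p. (norm (col A i \<bullet>c ee j))\<^sup>2))"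
    proof (rule sum.cong)
      fix i assume "i \<in> {..<m}"
      then have i: "i < m" by simp
      show "(vnorm (\<Theta> *\<^sub>v (col U i - theta_proj \<Theta> V (col U i))))\<^sup>2
          = nsq (col A i) - (\<Sum>j<p. (norm (col A i \<bullet>c ee j))\<^sup>2)"
        using theta_proj_value[OF K Theta VC img on colUc] colA[OF i] by simp
    qed simp
    also have "\<dots> = (\<Sum>j<l. lam j) - (\<Sum>i<m. \<Sum>j<p. (norm (col A i \<bullet>c ee j))\<^sup>2)"
      by (simp add: sum_subtractf totA)
    finally show ?thesis unfolding delta_pod_def dimU by simp
  qed
  define Tr where "Tr = mat m r (\<lambda>(i, j). t j $ i)"
  have Tr: "Tr \<in> carrier_mat m r" unfolding Tr_def by simp
  have colTr: "col Tr j = t j" if j: "j < r" for j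
    unfolding Tr_def using j tc[of j] r by (intro eq_vecI) auto
  define Vr where "Vr = mat_range (U * Tr)"
  have UTr: "U * Tr \<in> carrier_mat n r" using U Tr by simp
  have colUTr: "col (U * Tr) j = U *\<^sub>v t j" if j: "j < r" for j
    using col_mult2[OF U Tr j] colTr[OF j] by simp
  have colUTrc: "col (U * Tr) j \<in> carrier_vec n" for j using col_dim[of "U * Tr" j] U by simp
  have Vreq: "Vr = spanset n r (col (U * Tr))" unfolding Vr_def by (rule mat_range_spanset[OF UTr])
  have VrC: "Vr \<subseteq> carrier_vec n" unfolding Vreq using spanset_carrier by blast
  have imgr: "(\<lambda>v. \<Theta> *\<^sub>v v) ` Vr = spanset k r e"
  proof -
    have "(\<lambda>v. \<Theta> *\<^sub>v v) ` Vr = spanset k r (\<lambda>j. \<Theta> *\<^sub>v col (U * Tr) j)"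
      unfolding Vreq by (rule Theta_spanset[OF Theta colUTrc])
    also have "\<dots> = spanset k r b"
    proof (rule spanset_cong_f)
      fix j assume j: "j < r"
      then have jl: "j < l" using r by simp
      show "\<Theta> *\<^sub>v col (U * Tr) j = b j"
        unfolding colUTr[OF j] b_def A_def using Theta U tc[OF jl] by simp
    qed
    also have "\<dots> = spanset k r e"
    proof (rule spanset_scale)
      fix j assume j: "j < r"
      then have jl: "j < l" using r by simp
      show "b j = (of_real (s j) :: 'a) \<cdot>\<^sub>v e j" by (rule be[OF jl])
      show "(of_real (s j) :: 'a) \<noteq> 0" using spos[OF jl] by simp
      show "e j \<in> carrier_vec k" by (rule ec)
    qed
    finally show ?thesis .
  qed
  have ONr: "ON k r e" using ON_mono[OF ONe r] .
  have Dr: "delta_pod \<Theta> U Vr = (1 / real m) * ((\<Sum>j<l. lam j) - (\<Sum>j<r. lam j))"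
  proof -
    have "(\<Sum>i<m. \<Sum>j<r. (norm (col A i \<bullet>c e j))\<^sup>2) = (\<Sum>i<m. \<Sum>j<r. lam j * (norm (t j $ i))\<^sup>2)"
      using r by (intro sum.cong refl) (simp add: F5n)
    also have "\<dots> = (\<Sum>j<r. lam j * (\<Sum>i<m. (norm (t j $ i))\<^sup>2))"
      by (subst sum.swap) (simp add: sum_distrib_left)
    also have "\<dots> = (\<Sum>j<r. lam j)" using r by (intro sum.cong refl) (simp add: tn)
    finally show ?thesis using delta_eq[OF VrC imgr ONr] by simp
  qed
  have split: "(\<Sum>i\<in>{r..<l}. lam i) = (\<Sum>j<l. lam j) - (\<Sum>j<r. lam j)"
  proof -
    have "(\<Sum>j\<in>{0..<r}. lam j) + (\<Sum>j\<in>{r..<l}. lam j) = (\<Sum>j\<in>{0..<l}. lam j)"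
      using r by (intro sum.atLeastLessThan_concat) auto
    then show ?thesis by (simp add: atLeast0LessThan)
  qed
  have Vr_eq: "mat_range (U * mat m r (\<lambda>(i, j). t j $ i)) = Vr" unfolding Vr_def Tr_def ..
  have part2: "delta_pod \<Theta> U Vr \<le> delta_pod \<Theta> U V"
    if V: "is_subspace n V" "subspace_dim n V \<le> r" for V
  proof -
    obtain q f where q: "q \<le> subspace_dim n V" and fc: "\<forall>j<q. f j \<in> carrier_vec n"
      and Veq: "V = spanset n q f" using subspace_spanset[OF V(1)] by blast
    have VC: "V \<subseteq> carrier_vec n" unfolding Veq using spanset_carrier by blast
    have imgV: "(\<lambda>v. \<Theta> *\<^sub>v v) ` V = spanset k q (\<lambda>j. \<Theta> *\<^sub>v f j)"
      unfolding Veq by (rule Theta_spanset[OF Theta]) (use fc in auto)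
    have Tfc: "\<Theta> *\<^sub>v f j \<in> carrier_vec k" for j
    proof -
      have "dim_vec (\<Theta> *\<^sub>v f j) = k" using Theta by simp
      then show ?thesis by (rule carrier_vecI)
    qed
    obtain p w where pq: "p \<le> q" and ONw: "ON k p w"
      and sw: "spanset k q (\<lambda>j. \<Theta> *\<^sub>v f j) = spanset k p w"
      using gram_schmidt[OF K, of q "\<lambda>j. \<Theta> *\<^sub>v f j" k] Tfc by blast
    have pr: "p \<le> r" using pq q V(2) by simp
    have wc: "w j \<in> carrier_vec k" if "j < p" for j using ONw that by (rule ON_carrier)
    define cc where "cc j = (\<Sum>i<p. (norm (e j \<bullet>c w i))\<^sup>2)" for j
    have DV: "delta_pod \<Theta> U V = (1 / real m) * ((\<Sum>j<l. lam j) - (\<Sum>j<l. lam j * cc j))"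
    proof -
      have "(\<Sum>i<m. \<Sum>j<p. (norm (col A i \<bullet>c w j))\<^sup>2) = (\<Sum>j<p. \<Sum>i<m. (norm (col A i \<bullet>c w j))\<^sup>2)"
        by (rule sum.swap)
      also have "\<dots> = (\<Sum>j<p. \<Sum>j'<l. lam j' * (norm (e j' \<bullet>c w j))\<^sup>2)"
      proof (rule sum.cong[OF refl])
        fix j assume "j \<in> {..<p}"
        then show "(\<Sum>i<m. (norm (col A i \<bullet>c w j))\<^sup>2) = (\<Sum>j'<l. lam j' * (norm (e j' \<bullet>c w j))\<^sup>2)"
          using KEY[OF wc[of j]] by simp
      qed
      also have "\<dots> = (\<Sum>j'<l. lam j' * cc j')"
        unfolding cc_def by (subst sum.swap) (simp add: sum_distrib_left)
      finally show ?thesis using delta_eq[OF VC _ ONw] imgV sw by simp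
    qed
    have enorm: "nsq (e j) = 1" if "j < l" for j
    proof -
      have "(of_real (nsq (e j)) :: 'a) = 1" using ip_self[OF K, of "e j"] ON_ip[OF ONe that that] by simp
      then show ?thesis by (metis of_real_1 of_real_eq_iff)
    qed
    have wnorm: "nsq (w j) = 1" if "j < p" for j
    proof -
      have "(of_real (nsq (w j)) :: 'a) = 1" using ip_self[OF K, of "w j"] ON_ip[OF ONw that that] by simp
      then show ?thesis by (metis of_real_1 of_real_eq_iff)
    qed
    have c0: "cc j \<ge> 0" for j unfolding cc_def by (intro sum_nonneg) auto
    have c1: "cc j \<le> 1" if "j < l" for j
      using bessel[OF K ONw ec[of j]] enorm[OF that] unfolding cc_def by simp
    have cs: "(\<Sum>j<l. cc j) \<le> real r"
    proof -
      have "(\<Sum>j<l. cc j) = (\<Sum>i<p. \<Sum>j<l. (norm (w i \<bullet>c e j))\<^sup>2)"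
        unfolding cc_def
      proof (subst sum.swap, intro sum.cong refl)
        fix i j assume "i \<in> {..<p}" "j \<in> {..<l}"
        then have i: "i < p" by simp
        have "e j \<bullet>c w i = conjugate (w i \<bullet>c e j)" by (rule ip_conj[OF K wc[OF i] ec])
        then show "(norm (e j \<bullet>c w i))\<^sup>2 = (norm (w i \<bullet>c e j))\<^sup>2" by (simp add: norm_conj[OF K])
      qed
      also have "\<dots> \<le> (\<Sum>i<p. nsq (w i))"
        by (intro sum_mono bessel[OF K ONe wc]) simp
      also have "\<dots> = real p" by (simp add: wnorm)
      finally show ?thesis using pr by simp
    qed
    have lam0: "lam j \<ge> 0" if "j < l" for j using lampos[OF that] by simp
    have "(\<Sum>j<l. lam j * cc j) \<le> (\<Sum>j<r. lam j)"
      by (rule kyfan_real[OF sorted lam0 c0 c1 cs r])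
    then have "(\<Sum>j<l. lam j) - (\<Sum>j<r. lam j) \<le> (\<Sum>j<l. lam j) - (\<Sum>j<l. lam j * cc j)" by simp
    then have "(1 / real m) * ((\<Sum>j<l. lam j) - (\<Sum>j<r. lam j))
        \<le> (1 / real m) * ((\<Sum>j<l. lam j) - (\<Sum>j<l. lam j * cc j))"
      by (rule mult_left_mono) simp
    then show ?thesis using Dr DV by simp
  qed
  show ?thesis unfolding Vr_eq using Dr split part2 by auto
qed

end
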